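(* Let $w$ be a word over $\Omega$ of length $k$ and let $i \in I \setminus \{s\}$. Then $i + T(i) < k - s$.
   Context: Let $\Omega$ be a finite alphabet; a word of length $k$ is written $w = w_k w_{k-1}\dots w_1$. Autocorrelation: for $1 \le i \le k$, $b_i = 1$ if $w_j = w_{k-i+j}$ for all $j=1,\dots,i$, else $b_i=0$. $s = \max\{j \in\{1,\dots,k-1\}: b_j = 1\}$, or $s=0$ if no such $j$. For $1 \le i \le k-1$ with $b_i = 1$, let $[i] = \max\{ j \in \{1,\dots,k-1\} : b_j = 1 \text{ and } i = k - t(k-j) \text{ for some integer } 1 \le t \le \lfloor k/(k-j) \rfloor\}$, and $I = \{[i] : 1 \le i \le k-1,\ b_i = 1\}$ (its largest element is $s$ when $s>0$). For $i \in I$, $T(i) = \max\{ t > 0 : w_{k-i}w_{k-i-1}\dots w_{k-i-t+1} = w_{k-j}w_{k-j-1}\dots w_{k-j-t+1} \text{ for some } j \in I,\ j > i\}$, with $T(i) = 0$ if this set is empty. *)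

theory Defs
  imports Main
begin

text \<open>A word of length k is w_k w_(k-1) ... w_1; we represent it by a function
  w :: nat => 'a whose values at positions 1..k are the letters.\<close>

definition autocorr :: "(nat \<Rightarrow> 'a) \<Rightarrow> nat \<Rightarrow> nat \<Rightarrow> bool" where
  "autocorr w k i \<longleftrightarrow> (\<forall>j\<in>{1..i}. w j = w (k - i + j))"

definition s_of :: "(nat \<Rightarrow> 'a) \<Rightarrow> nat \<Rightarrow> nat" where
  "s_of w k = (if \<exists>j\<in>{1..k-1}. autocorr w k j
               then Max {j\<in>{1..k-1}. autocorr w k j} else 0)"

definition cls :: "(nat \<Rightarrow> 'a) \<Rightarrow> nat \<Rightarrow> nat \<Rightarrow> nat" where
  "cls w k i = Max {j\<in>{1..k-1}. autocorr w k j \<and>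
      (\<exists>t::nat. 1 \<le> t \<and> t \<le> k div (k - j) \<and> i = k - t * (k - j))}"

definition I_set :: "(nat \<Rightarrow> 'a) \<Rightarrow> nat \<Rightarrow> nat set" where
  "I_set w k = cls w k ` {i\<in>{1..k-1}. autocorr w k i}"

text \<open>T(i): longest common block w_(k-i) ... w_(k-i-t+1) = w_(k-j) ... w_(k-j-t+1)
  for some j in I with j > i; the blocks are required to lie inside the word
  (t <= k - j, which implies t <= k - i).\<close>

definition T_of :: "(nat \<Rightarrow> 'a) \<Rightarrow> nat \<Rightarrow> nat \<Rightarrow> nat" where
  "T_of w k i = (let S = {t::nat. 0 < t \<and> (\<exists>j\<in>I_set w k. i < j \<and> t \<le> k - j \<and>
                        (\<forall>m<t. w (k - i - m) = w (k - j - m)))}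
                 in if S = {} then 0 else Max S)"

end

theory Submission
  imports Defs
begin

definition per :: "(nat \<Rightarrow> 'a) \<Rightarrow> nat \<Rightarrow> nat \<Rightarrow> bool" where
  "per w k q \<longleftrightarrow> (\<forall>n. 1 \<le> n \<longrightarrow> n + q \<le> k \<longrightarrow> w n = w (n + q))"

lemma per_mult:
  assumes "per w k q" "1 \<le> a" "a + c*q \<le> k"
  shows "w a = w (a + c*q)"
  using assms(3)
proof (induction c)
  case 0 then show ?case by simp
next
  case (Suc c)
  then have "w a = w (a + c*q)" by simp
  also have "\<dots> = w (a + c*q + q)" using assms(1,2) Suc.prems unfolding per_def by auto
  finally show ?case by (simp add: algebra_simps)
qed

lemma per_mod:
  assumes "per w k q" "1 \<le> a" "1 \<le> b" "a \<le> k" "b \<le> k" "a mod q = b mod q"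
  shows "w a = w b"
proof -
  have main: "w a = w b" if "per w k q" "1 \<le> a" "b \<le> k" "a \<le> b" "a mod q = b mod q" for a b
  proof -
    have "q dvd (b - a)" using that by (metis mod_eq_dvd_iff_nat)
    then obtain c where c: "b - a = q * c" by blast
    have "b = a + c*q" using c that(4) by (simp add: algebra_simps)
    then show ?thesis using per_mult[OF that(1) that(2), of c] that(3) by simp
  qed
  show ?thesis
  proof (cases "a \<le> b")
    case True then show ?thesis using main assms by blast
  next
    case False then show ?thesis using main[of b a] assms by force
  qed
qed

lemma per_sub:
  assumes "per w k a" "per w k b" "a < b" "a + b \<le> k"
  shows "per w k (b - a)"
  unfolding per_def
proof (intro allI impI)
  fix n assume n: "1 \<le> n" "n + (b - a) \<le> k"
  show "w n = w (n + (b - a))"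
  proof (cases "a < n")
    case True
    have "w (n - a) = w (n - a + a)" using assms(1) n True unfolding per_def by auto
    moreover have "w (n - a) = w (n - a + b)" using assms(2,3) n True unfolding per_def by auto
    ultimately show ?thesis using True assms(3) by (simp add: algebra_simps)
  next
    case False
    have "w n = w (n + b)" using assms(2,4) n False unfolding per_def by auto
    moreover have "w (n + b - a) = w (n + b - a + a)" using assms(1,3,4) n False unfolding per_def by auto
    ultimately show ?thesis using False assms(3) by (simp add: algebra_simps)
  qed
qed

lemma per_gcd:
  "per w k a \<Longrightarrow> per w k b \<Longrightarrow> a + b \<le> k \<Longrightarrow> per w k (gcd a b)"
proof (induction "a + b" arbitrary: a b rule: less_induct)
  case less
  show ?case
  proof (cases "a = 0 \<or> b = 0 \<or> a = b")
    case True then show ?thesis using less.prems by auto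
  next
    case False
    show ?thesis
    proof (cases "a < b")
      case True
      have "per w k (b - a)" using per_sub less.prems True by blast
      then have "per w k (gcd a (b - a))" using less.hyps[of a "b - a"] less.prems False True by auto
      moreover have "gcd a (b - a) = gcd a b" using True
        by (metis gcd.commute gcd_diff1_nat less_or_eq_imp_le)
      ultimately show ?thesis by simp
    next
      case f2: False
      then have ba: "b < a" using False by auto
      have "per w k (a - b)" using per_sub less.prems ba by (metis add.commute)
      then have "per w k (gcd b (a - b))" using less.hyps[of b "a - b"] less.prems False ba by auto
      moreover have "gcd b (a - b) = gcd a b" using ba
        by (metis gcd.commute gcd_diff1_nat less_or_eq_imp_le)
      ultimately show ?thesis by simp
    qed
  qed
qed

lemma autocorr_per:
  assumes "i \<le> k" shows "autocorr w k i \<longleftrightarrow> per w k (k - i)"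
  unfolding autocorr_def per_def
proof
  assume h: "\<forall>j\<in>{1..i}. w j = w (k - i + j)"
  show "\<forall>n. 1 \<le> n \<longrightarrow> n + (k - i) \<le> k \<longrightarrow> w n = w (n + (k - i))"
  proof (intro allI impI)
    fix n assume "1 \<le> n" "n + (k - i) \<le> k"
    then show "w n = w (n + (k - i))" using h assms by (auto simp: add.commute)
  qed
next
  assume h: "\<forall>n. 1 \<le> n \<longrightarrow> n + (k - i) \<le> k \<longrightarrow> w n = w (n + (k - i))"
  show "\<forall>j\<in>{1..i}. w j = w (k - i + j)"
  proof
    fix j assume "j \<in> {1..i}"
    then show "w j = w (k - i + j)" using h[rule_format, of j] assms by (auto simp: add.commute)
  qed
qed

theorem proposition4p1:
  fixes \<Omega> :: "'a set" and w :: "nat \<Rightarrow> 'a" and k i :: nat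
  assumes "finite \<Omega>"
    and "\<forall>j\<in>{1..k}. w j \<in> \<Omega>"
    and "i \<in> I_set w k - {s_of w k}"
  shows "i + T_of w k i < k - s_of w k"
proof -
  define B where "B = {j\<in>{1..k-1}. autocorr w k j}"
  define s where "s = s_of w k"
  define p where "p = k - s"
  define C where "C = (\<lambda>i'. {j\<in>{1..k-1}. autocorr w k j \<and>
      (\<exists>t::nat. 1 \<le> t \<and> t \<le> k div (k - j) \<and> i' = k - t * (k - j))})"
  have clsC: "cls w k i' = Max (C i')" for i' unfolding cls_def C_def by simp
  have finB: "finite B" unfolding B_def by simp
  have IB: "I_set w k = cls w k ` B" unfolding I_set_def B_def by simp
  obtain i' where i': "i' \<in> B" "i = cls w k i'" using assms(3) IB by auto
  have Bne: "B \<noteq> {}" using i' by auto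
  have sB: "s = Max B" using Bne unfolding s_def s_of_def B_def by auto
  have s_in: "s \<in> B" using sB finB Bne by simp
  have s_max: "j \<le> s" if "j \<in> B" for j using sB finB that by simp
  have s_rng: "1 \<le> s" "s \<le> k - 1" using s_in unfolding B_def by auto
  have p_rng: "1 \<le> p" "p < k" using s_rng unfolding p_def by auto
  have perB: "per w k (k - j)" if "j \<in> B" for j
    using that autocorr_per[of j k w] unfolding B_def by auto
  have perp: "per w k p" using perB[OF s_in] p_def by simp
  have minp: "p \<le> q" if "per w k q" "1 \<le> q" "q < k" for q
  proof -
    have "k - q \<in> B" unfolding B_def using that autocorr_per[of "k - q" k w] by auto
    then show ?thesis using s_max p_def by fastforce
  qed
  have G: "p dvd q" if "per w k q" "1 \<le> q" "q + p \<le> k" for q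
  proof -
    have pg: "per w k (gcd q p)" using per_gcd that perp by blast
    have "gcd q p \<ge> 1" using that(2) by (simp add: Suc_le_eq)
    moreover have "gcd q p \<le> p" using p_rng by (simp add: gcd_le2_nat)
    ultimately have "p \<le> gcd q p" using minp[OF pg] p_rng by linarith
    then have "gcd q p = p" using \<open>gcd q p \<le> p\<close> by simp
    then show ?thesis by (metis gcd_dvd1)
  qed
  have Cprops: "cls w k i' \<in> C i' \<and> (\<forall>j\<in>C i'. j \<le> cls w k i')" if "i' \<in> B" for i'
  proof -
    have fin: "finite (C i')" unfolding C_def by simp
    have r: "1 \<le> i'" "i' \<le> k - 1" "autocorr w k i'" using that unfolding B_def by auto
    then have pos: "0 < k - i'" by simp
    have "(k - i') div (k - i') \<le> k div (k - i')" by (rule div_le_mono) simp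
    then have d1: "1 \<le> k div (k - i')" using pos by simp
    have "i' \<in> C i'" unfolding C_def using r d1 by (auto intro!: exI[of _ 1])
    then have ne: "C i' \<noteq> {}" by auto
    show ?thesis using fin ne clsC by simp
  qed
  have LB: "j = s" if LBa: "j' \<in> B" "j = cls w k j'" "p dvd (k - j)" for j j'
  proof -
    have jC: "j \<in> C j'" using Cprops LBa by simp
    then obtain t where t: "1 \<le> t" "t \<le> k div (k - j)" "j' = k - t * (k - j)" "j \<in> B"
      unfolding C_def B_def by auto
    obtain c where c: "k - j = p * c" using LBa(3) by blast
    have "0 < k - j" using t(4) unfolding B_def by auto
    then have tk: "t * (k - j) \<le> k" using t(2) by (simp add: less_eq_div_iff_mult_less_eq)
    have "c \<ge> 1" using c t(4) unfolding B_def by (cases c) auto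
    have "s \<in> C j'"
      unfolding C_def
    proof (intro CollectI conjI)
      show "s \<in> {1..k-1}" "autocorr w k s" using s_in unfolding B_def by auto
      show "\<exists>t. 1 \<le> t \<and> t \<le> k div (k - s) \<and> j' = k - t * (k - s)"
      proof (intro exI conjI)
        show "1 \<le> t * c" using t(1) \<open>c \<ge> 1\<close> by simp
        have "t * c * p \<le> k" using tk c by (simp add: algebra_simps)
        then show "t * c \<le> k div (k - s)" using p_rng p_def by (simp add: less_eq_div_iff_mult_less_eq)
        show "j' = k - t * c * (k - s)" using t(3) c p_def by (simp add: algebra_simps)
      qed
    qed
    then have "s \<le> j" using Cprops[OF LBa(1)] LBa(2) by auto
    moreover have "j \<le> s" using s_max t(4) by simp
    ultimately show ?thesis by simp
  qed
  have LB2: "p dvd (k - j)" if "j \<in> B" "p \<le> j" for j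
    using G[OF perB[OF that(1)]] that unfolding B_def by auto
  have iB: "i \<in> B" using Cprops[OF i'(1)] i'(2) unfolding C_def B_def by auto
  have ins: "i \<noteq> s" using assms(3) s_def by simp
  have ip: "i < p"
  proof (rule ccontr)
    assume "\<not> i < p"
    then have "p dvd (k - i)" using LB2 iB by simp
    then show False using LB[OF i'] ins by simp
  qed
  define S where "S = {t::nat. 0 < t \<and> (\<exists>j\<in>I_set w k. i < j \<and> t \<le> k - j \<and>
                        (\<forall>m<t. w (k - i - m) = w (k - j - m)))}"
  have Tdef: "T_of w k i = (if S = {} then 0 else Max S)" unfolding T_of_def S_def Let_def by simp
  show ?thesis
  proof (cases "S = {}")
    case True then show ?thesis using Tdef ip p_def s_def by simp
  next
    case False
    have finS: "finite S" unfolding S_def by (rule finite_subset[of _ "{..k}"]) auto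
    define t where "t = Max S"
    have "t \<in> S" using finS False t_def by simp
    then obtain j where j: "j \<in> I_set w k" "i < j" "t \<le> k - j"
        "\<forall>m<t. w (k - i - m) = w (k - j - m)" unfolding S_def by auto
    obtain j' where j': "j' \<in> B" "j = cls w k j'" using j(1) IB by auto
    have jB: "j \<in> B" using Cprops[OF j'(1)] j'(2) unfolding C_def B_def by auto
    have "i + t < p"
    proof (rule ccontr)
      assume "\<not> i + t < p"
      then have itp: "p \<le> i + t" by simp
      define d where "d = j - i"
      have js: "j \<le> s" using s_max jB by simp
      have jk: "j \<le> k - 1" using jB unfolding B_def by simp
      define L where "L = k - j - t + 1"
      have seg: "w n = w (n + d)" if "L \<le> n" "n + d \<le> k" for n
      proof (cases "n \<le> k - j")
        case True
        define m where "m = k - j - n"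
        have "m < t" using that True j(3) unfolding m_def L_def by linarith
        then have "w (k - i - m) = w (k - j - m)" using j(4) by simp
        moreover have "k - j - m = n" using True m_def by simp
        moreover have "k - i - m = n + d" using True m_def d_def j(2) jk by simp
        ultimately show ?thesis by simp
      next
        case False
        define a where "a = n - (k - j)"
        have a: "1 \<le> a" "a \<le> i" using False that(2) d_def j(2) jk unfolding a_def by auto
        have "autocorr w k j" "autocorr w k i" using jB iB unfolding B_def by auto
        then have "w a = w (k - j + a)" "w a = w (k - i + a)" using a j(2) unfolding autocorr_def by auto
        moreover have "k - j + a = n" "k - i + a = n + d" using False a_def d_def j(2) jk by auto
        ultimately show ?thesis by simp
      qed
      have L1: "1 \<le> L" unfolding L_def by simp
      have Lp: "L + p \<le> k - d + 1" using itp j(3) j(2) jk unfolding L_def d_def by linarith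
      have perd: "per w k d" unfolding per_def
      proof (intro allI impI)
        fix n assume n: "1 \<le> n" "n + d \<le> k"
        define r where "r = L + (n + p - L mod p) mod p"
        have rL: "L \<le> r" "r < L + p" unfolding r_def using p_rng by auto
        have rmod: "r mod p = n mod p"
        proof -
          have "r mod p = (L mod p + (n + p - L mod p)) mod p" unfolding r_def
            by (metis mod_add_left_eq mod_add_right_eq)
          also have "L mod p + (n + p - L mod p) = n + p"
            using mod_less_divisor[of p L] p_rng by linarith
          finally show ?thesis by simp
        qed
        have r1: "1 \<le> r" using rL(1) L1 by linarith
        have dk: "d \<le> k" using d_def jk by simp
        have rk: "r + d \<le> k" using rL(2) Lp dk by linarith
        have nk: "n \<le> k" using n(2) by linarith
        have "w n = w r" by (rule per_mod[OF perp n(1) r1 nk]) (use rk rmod in auto)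
        moreover have "(n + d) mod p = (r + d) mod p" using rmod by (metis mod_add_left_eq)
        then have "w (n + d) = w (r + d)" by (intro per_mod[OF perp]) (use n rk r1 in auto)
        moreover have "w r = w (r + d)" using seg rL(1) rk by blast
        ultimately show "w n = w (n + d)" by simp
      qed
      have d1: "1 \<le> d" using d_def j(2) by simp
      have dp: "d + p \<le> k" using d_def p_def js j(2) s_rng by linarith
      have "p dvd d" using G[OF perd d1 dp] .
      then have "p \<le> d" using d1 by (simp add: dvd_imp_le)
      then have "p \<le> j" using d_def j(2) by linarith
      then have "p dvd (k - j)" using LB2 jB by simp
      then have "p dvd (k - j + d)" using \<open>p dvd d\<close> by simp
      moreover have "k - j + d = k - i" using d_def j(2) jk by simp
      ultimately have "p dvd (k - i)" by simp
      then show False using LB[OF i'] ins by simp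
    qed
    then show ?thesis using Tdef False t_def p_def s_def by simp
  qed
qed

end
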